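(* Let $A\subseteq M\preccurlyeq N$ be models of a complete affine theory. Then $\mathrm{dcl}_M(A)=\mathrm{dcl}_N(A)$.
   Context: Affine continuous logic: $L$-structures are complete metric spaces $(M,d)$ with $d\le1$ and Lipschitz interpretations of function symbols and $[0,1]$-valued relation symbols. Affine formulas are built from $1$ and atomic formulas (including $d$) using only $r\cdot\phi$ ($r\in\mathbb R$), $\phi+\psi$, $\inf_x$, $\sup_x$; $M\preccurlyeq N$ means $M\subseteq N$ and every affine formula with parameters from $M$ has the same value in $M$ and $N$. A predicate $P:M\to\mathbb R$ is $A$-definable if it is a uniform limit on $M$ of interpretations of affine formulas with parameters from $A$. An element $a\in M$ is $A$-definable in $M$ if the predicate $x\mapsto d(x,a)$ on $M$ is $A$-definable; $\mathrm{dcl}_M(A)$ is the set of elements of $M$ that are $A$-definable in $M$. *)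

theory Defs
  imports Main "HOL-Analysis.Analysis"
begin

record ('f, 'r) signature =
  farity :: "'f \<Rightarrow> nat"
  rarity :: "'r \<Rightarrow> nat"

record ('a, 'f, 'r) struct =
  sdom  :: "'a set"
  sdist :: "'a \<Rightarrow> 'a \<Rightarrow> real"
  sfun  :: "'f \<Rightarrow> 'a list \<Rightarrow> 'a"
  srel  :: "'r \<Rightarrow> 'a list \<Rightarrow> real"

definition tuple_dist :: "('a \<Rightarrow> 'a \<Rightarrow> real) \<Rightarrow> 'a list \<Rightarrow> 'a list \<Rightarrow> real" where
  "tuple_dist d xs ys = (\<Sum>i<length xs. d (xs ! i) (ys ! i))"

definition is_structure :: "('f, 'r) signature \<Rightarrow> ('a, 'f, 'r) struct \<Rightarrow> bool" where
  "is_structure L S \<longleftrightarrow>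
     sdom S \<noteq> {} \<and>
     \<comment> \<open>metric bounded by 1\<close>
     (\<forall>x\<in>sdom S. \<forall>y\<in>sdom S. 0 \<le> sdist S x y \<and> sdist S x y \<le> 1
        \<and> (sdist S x y = 0 \<longleftrightarrow> x = y) \<and> sdist S x y = sdist S y x) \<and>
     (\<forall>x\<in>sdom S. \<forall>y\<in>sdom S. \<forall>z\<in>sdom S. sdist S x z \<le> sdist S x y + sdist S y z) \<and>
     \<comment> \<open>completeness\<close>
     (\<forall>X::nat \<Rightarrow> 'a. (\<forall>n. X n \<in> sdom S) \<longrightarrow>
        (\<forall>e>0. \<exists>N. \<forall>m\<ge>N. \<forall>n\<ge>N. sdist S (X m) (X n) < e) \<longrightarrow>
        (\<exists>l\<in>sdom S. \<forall>e>0. \<exists>N. \<forall>n\<ge>N. sdist S (X n) l < e)) \<and>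
     \<comment> \<open>function symbols: total on the universe and Lipschitz\<close>
     (\<forall>f. (\<forall>xs. set xs \<subseteq> sdom S \<and> length xs = farity L f \<longrightarrow> sfun S f xs \<in> sdom S) \<and>
          (\<exists>C. \<forall>xs ys. set xs \<subseteq> sdom S \<and> set ys \<subseteq> sdom S \<and>
               length xs = farity L f \<and> length ys = farity L f \<longrightarrow>
               sdist S (sfun S f xs) (sfun S f ys) \<le> C * tuple_dist (sdist S) xs ys)) \<and>
     \<comment> \<open>relation symbols: [0,1]-valued and Lipschitz\<close>
     (\<forall>R. (\<forall>xs. set xs \<subseteq> sdom S \<and> length xs = rarity L R \<longrightarrow>
              0 \<le> srel S R xs \<and> srel S R xs \<le> 1) \<and>
          (\<exists>C. \<forall>xs ys. set xs \<subseteq> sdom S \<and> set ys \<subseteq> sdom S \<and>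
               length xs = rarity L R \<and> length ys = rarity L R \<longrightarrow>
               \<bar>srel S R xs - srel S R ys\<bar> \<le> C * tuple_dist (sdist S) xs ys))"

datatype 'f tm = Var nat | Fn 'f "'f tm list"

datatype ('f, 'r) afm =
    One
  | Rel 'r "'f tm list"
  | Dist "'f tm" "'f tm"
  | Scale real "('f, 'r) afm"
  | Add "('f, 'r) afm" "('f, 'r) afm"
  | Inf nat "('f, 'r) afm"
  | Sup nat "('f, 'r) afm"

fun wf_tm :: "('f, 'r) signature \<Rightarrow> 'f tm \<Rightarrow> bool" where
  "wf_tm L (Var i) = True"
| "wf_tm L (Fn f ts) = (length ts = farity L f \<and> (\<forall>t\<in>set ts. wf_tm L t))"

fun wf_fm :: "('f, 'r) signature \<Rightarrow> ('f, 'r) afm \<Rightarrow> bool" where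
  "wf_fm L One = True"
| "wf_fm L (Rel R ts) = (length ts = rarity L R \<and> (\<forall>t\<in>set ts. wf_tm L t))"
| "wf_fm L (Dist t u) = (wf_tm L t \<and> wf_tm L u)"
| "wf_fm L (Scale r \<phi>) = wf_fm L \<phi>"
| "wf_fm L (Add \<phi> \<psi>) = (wf_fm L \<phi> \<and> wf_fm L \<psi>)"
| "wf_fm L (Inf i \<phi>) = wf_fm L \<phi>"
| "wf_fm L (Sup i \<phi>) = wf_fm L \<phi>"

fun fv_tm :: "'f tm \<Rightarrow> nat set" where
  "fv_tm (Var i) = {i}"
| "fv_tm (Fn f ts) = (\<Union>t\<in>set ts. fv_tm t)"

fun fv :: "('f, 'r) afm \<Rightarrow> nat set" where
  "fv One = {}"
| "fv (Rel R ts) = (\<Union>t\<in>set ts. fv_tm t)"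
| "fv (Dist t u) = fv_tm t \<union> fv_tm u"
| "fv (Scale r \<phi>) = fv \<phi>"
| "fv (Add \<phi> \<psi>) = fv \<phi> \<union> fv \<psi>"
| "fv (Inf i \<phi>) = fv \<phi> - {i}"
| "fv (Sup i \<phi>) = fv \<phi> - {i}"

fun tm_eval :: "('a, 'f, 'r) struct \<Rightarrow> (nat \<Rightarrow> 'a) \<Rightarrow> 'f tm \<Rightarrow> 'a" where
  "tm_eval S \<sigma> (Var i) = \<sigma> i"
| "tm_eval S \<sigma> (Fn f ts) = sfun S f (map (tm_eval S \<sigma>) ts)"

fun fm_eval :: "('a, 'f, 'r) struct \<Rightarrow> (nat \<Rightarrow> 'a) \<Rightarrow> ('f, 'r) afm \<Rightarrow> real" where
  "fm_eval S \<sigma> One = 1"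
| "fm_eval S \<sigma> (Rel R ts) = srel S R (map (tm_eval S \<sigma>) ts)"
| "fm_eval S \<sigma> (Dist t u) = sdist S (tm_eval S \<sigma> t) (tm_eval S \<sigma> u)"
| "fm_eval S \<sigma> (Scale r \<phi>) = r * fm_eval S \<sigma> \<phi>"
| "fm_eval S \<sigma> (Add \<phi> \<psi>) = fm_eval S \<sigma> \<phi> + fm_eval S \<sigma> \<psi>"
| "fm_eval S \<sigma> (Inf i \<phi>) = (INF a\<in>sdom S. fm_eval S (\<sigma>(i := a)) \<phi>)"
| "fm_eval S \<sigma> (Sup i \<phi>) = (SUP a\<in>sdom S. fm_eval S (\<sigma>(i := a)) \<phi>)"

definition substructure :: "('f, 'r) signature \<Rightarrow> ('a, 'f, 'r) struct \<Rightarrow> ('a, 'f, 'r) struct \<Rightarrow> bool" where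
  "substructure L M N \<longleftrightarrow>
     sdom M \<subseteq> sdom N \<and>
     (\<forall>x\<in>sdom M. \<forall>y\<in>sdom M. sdist M x y = sdist N x y) \<and>
     (\<forall>f xs. set xs \<subseteq> sdom M \<and> length xs = farity L f \<longrightarrow> sfun M f xs = sfun N f xs) \<and>
     (\<forall>R xs. set xs \<subseteq> sdom M \<and> length xs = rarity L R \<longrightarrow> srel M R xs = srel N R xs)"

definition elem_sub :: "('f, 'r) signature \<Rightarrow> ('a, 'f, 'r) struct \<Rightarrow> ('a, 'f, 'r) struct \<Rightarrow> bool" where
  "elem_sub L M N \<longleftrightarrow> substructure L M N \<and>
     (\<forall>\<phi> \<sigma>. wf_fm L \<phi> \<and> (\<forall>i. \<sigma> i \<in> sdom M) \<longrightarrow> fm_eval M \<sigma> \<phi> = fm_eval N \<sigma> \<phi>)"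

definition sentence_value :: "('a, 'f, 'r) struct \<Rightarrow> ('f, 'r) afm \<Rightarrow> real" where
  "sentence_value S \<phi> = fm_eval S (\<lambda>_. SOME a. a \<in> sdom S) \<phi>"

definition aff_theory :: "('f, 'r) signature \<Rightarrow> ('a, 'f, 'r) struct \<Rightarrow> (('f, 'r) afm \<times> real) set" where
  "aff_theory L S = {(\<phi>, sentence_value S \<phi>) | \<phi>. wf_fm L \<phi> \<and> fv \<phi> = {}}"

text \<open>A complete affine theory (in the signature L, realised by structures with universe in 'a):
  the affine theory of some L-structure.\<close>
definition complete_aff_theory :: "('f, 'r) signature \<Rightarrow> 'a itself \<Rightarrow> (('f, 'r) afm \<times> real) set \<Rightarrow> bool" where
  "complete_aff_theory L _ T \<longleftrightarrow> (\<exists>K :: ('a, 'f, 'r) struct. is_structure L K \<and> T = aff_theory L K)"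

definition models :: "('a, 'f, 'r) struct \<Rightarrow> (('f, 'r) afm \<times> real) set \<Rightarrow> bool" where
  "models S T \<longleftrightarrow> (\<forall>(\<phi>, r)\<in>T. sentence_value S \<phi> = r)"

text \<open>P is A-definable in M: uniform limit on M of affine formulas \<phi>(x) (x = variable 0) with
  parameters from A (all other free variables assigned to elements of A).\<close>
definition definable_pred :: "('f, 'r) signature \<Rightarrow> ('a, 'f, 'r) struct \<Rightarrow> 'a set \<Rightarrow> ('a \<Rightarrow> real) \<Rightarrow> bool" where
  "definable_pred L M A P \<longleftrightarrow>
     (\<forall>e>0. \<exists>\<phi> \<sigma>. wf_fm L \<phi> \<and> (\<forall>i\<in>fv \<phi> - {0}. \<sigma> i \<in> A) \<and>
        (\<forall>x\<in>sdom M. \<bar>P x - fm_eval M (\<sigma>(0 := x)) \<phi>\<bar> \<le> e))"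

definition dcl :: "('f, 'r) signature \<Rightarrow> ('a, 'f, 'r) struct \<Rightarrow> 'a set \<Rightarrow> 'a set" where
  "dcl L M A = {a \<in> sdom M. definable_pred L M A (\<lambda>x. sdist M x a)}"

end

theory Submission
  imports Defs
begin

lemma tm_eval_cong:
  "(\<forall>i\<in>fv_tm t. \<sigma> i = \<tau> i) \<Longrightarrow> tm_eval S \<sigma> t = tm_eval S \<tau> t"
proof (induction t)
  case (Fn f ts)
  have "map (tm_eval S \<sigma>) ts = map (tm_eval S \<tau>) ts"
    using Fn by (auto simp: map_eq_conv)
  then show ?case by (metis tm_eval.simps(2))
qed simp

lemma fm_eval_cong:
  "(\<forall>i\<in>fv \<phi>. \<sigma> i = \<tau> i) \<Longrightarrow> fm_eval S \<sigma> \<phi> = fm_eval S \<tau> \<phi>"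
proof (induction \<phi> arbitrary: \<sigma> \<tau>)
  case (Rel R ts)
  have "map (tm_eval S \<sigma>) ts = map (tm_eval S \<tau>) ts"
    using Rel by (auto simp: map_eq_conv intro!: tm_eval_cong)
  then show ?case by (metis fm_eval.simps(2))
next
  case (Dist t u)
  have "tm_eval S \<sigma> t = tm_eval S \<tau> t" "tm_eval S \<sigma> u = tm_eval S \<tau> u"
    using Dist by (auto intro!: tm_eval_cong)
  then show ?case by simp
next
  case (Inf i \<phi>)
  have "\<And>a. fm_eval S (\<sigma>(i := a)) \<phi> = fm_eval S (\<tau>(i := a)) \<phi>"
    using Inf by (intro Inf.IH) auto
  then show ?case by simp
next
  case (Sup i \<phi>)
  have "\<And>a. fm_eval S (\<sigma>(i := a)) \<phi> = fm_eval S (\<tau>(i := a)) \<phi>"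
    using Sup by (intro Sup.IH) auto
  then show ?case by simp
next
  case (Add \<phi>1 \<phi>2)
  have "fm_eval S \<sigma> \<phi>1 = fm_eval S \<tau> \<phi>1" "fm_eval S \<sigma> \<phi>2 = fm_eval S \<tau> \<phi>2"
    using Add by (intro Add.IH; auto)+
  then show ?case by simp
qed auto

lemma finite_fv_tm: "finite (fv_tm t)"
  by (induction t) auto

lemma finite_fv: "finite (fv \<phi>)"
  by (induction \<phi>) (auto simp: finite_fv_tm)

lemma tm_eval_in:
  assumes S: "is_structure L S" and "wf_tm L t" and "\<forall>i. \<sigma> i \<in> sdom S"
  shows "tm_eval S \<sigma> t \<in> sdom S"
  using assms(2)
proof (induction t)
  case (Var x)
  then show ?case using assms(3) by simp
next
  case (Fn f ts)
  have cl: "\<forall>xs. set xs \<subseteq> sdom S \<and> length xs = farity L f \<longrightarrow> sfun S f xs \<in> sdom S"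
    using S unfolding is_structure_def by blast
  have "set (map (tm_eval S \<sigma>) ts) \<subseteq> sdom S" using Fn by auto
  moreover have "length (map (tm_eval S \<sigma>) ts) = farity L f" using Fn by simp
  ultimately show ?case using cl by simp
qed

lemma fm_bounded:
  assumes S: "is_structure L S" and "wf_fm L \<phi>"
  shows "\<exists>B. \<forall>\<sigma>. (\<forall>i. \<sigma> i \<in> sdom S) \<longrightarrow> \<bar>fm_eval S \<sigma> \<phi>\<bar> \<le> B"
  using assms(2)
proof (induction \<phi>)
  case One
  then show ?case by auto
next
  case (Rel R ts)
  have b: "\<forall>xs. set xs \<subseteq> sdom S \<and> length xs = rarity L R \<longrightarrow> 0 \<le> srel S R xs \<and> srel S R xs \<le> 1"
    using S unfolding is_structure_def by blast
  show ?case
  proof (intro exI allI impI)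
    fix \<sigma> :: "nat \<Rightarrow> _" assume s: "\<forall>i. \<sigma> i \<in> sdom S"
    have "set (map (tm_eval S \<sigma>) ts) \<subseteq> sdom S" using Rel s tm_eval_in[OF S] by auto
    moreover have "length (map (tm_eval S \<sigma>) ts) = rarity L R" using Rel by simp
    ultimately show "\<bar>fm_eval S \<sigma> (Rel R ts)\<bar> \<le> 1" using b by fastforce
  qed
next
  case (Dist t u)
  show ?case
  proof (intro exI allI impI)
    fix \<sigma> :: "nat \<Rightarrow> _" assume s: "\<forall>i. \<sigma> i \<in> sdom S"
    have "tm_eval S \<sigma> t \<in> sdom S" "tm_eval S \<sigma> u \<in> sdom S"
      using Dist s tm_eval_in[OF S] by auto
    then show "\<bar>fm_eval S \<sigma> (Dist t u)\<bar> \<le> 1" using S unfolding is_structure_def by auto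
  qed
next
  case (Scale r \<phi>)
  then obtain B where B: "\<forall>\<sigma>. (\<forall>i. \<sigma> i \<in> sdom S) \<longrightarrow> \<bar>fm_eval S \<sigma> \<phi>\<bar> \<le> B" by auto
  show ?case
  proof (intro exI allI impI)
    fix \<sigma> :: "nat \<Rightarrow> _" assume s: "\<forall>i. \<sigma> i \<in> sdom S"
    have "\<bar>r * fm_eval S \<sigma> \<phi>\<bar> \<le> \<bar>r\<bar> * B"
      unfolding abs_mult using B s by (simp add: mult_left_mono)
    then show "\<bar>fm_eval S \<sigma> (Scale r \<phi>)\<bar> \<le> \<bar>r\<bar> * B" by simp
  qed
next
  case (Add \<phi> \<psi>)
  then obtain B1 B2 where B1: "\<forall>\<sigma>. (\<forall>i. \<sigma> i \<in> sdom S) \<longrightarrow> \<bar>fm_eval S \<sigma> \<phi>\<bar> \<le> B1"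
    and B2: "\<forall>\<sigma>. (\<forall>i. \<sigma> i \<in> sdom S) \<longrightarrow> \<bar>fm_eval S \<sigma> \<psi>\<bar> \<le> B2" by auto
  show ?case
  proof (intro exI allI impI)
    fix \<sigma> :: "nat \<Rightarrow> _" assume s: "\<forall>i. \<sigma> i \<in> sdom S"
    have "\<bar>fm_eval S \<sigma> \<phi>\<bar> \<le> B1" "\<bar>fm_eval S \<sigma> \<psi>\<bar> \<le> B2" using B1 B2 s by auto
    then show "\<bar>fm_eval S \<sigma> (Add \<phi> \<psi>)\<bar> \<le> B1 + B2" by simp
  qed
next
  case (Inf j \<phi>)
  then obtain B where B: "\<forall>\<sigma>. (\<forall>i. \<sigma> i \<in> sdom S) \<longrightarrow> \<bar>fm_eval S \<sigma> \<phi>\<bar> \<le> B" by auto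
  have ne: "sdom S \<noteq> {}" using S unfolding is_structure_def by blast
  show ?case
  proof (intro exI allI impI)
    fix \<sigma> :: "nat \<Rightarrow> _" assume s: "\<forall>i. \<sigma> i \<in> sdom S"
    have bb: "\<And>a. a \<in> sdom S \<Longrightarrow> \<bar>fm_eval S (\<sigma>(j := a)) \<phi>\<bar> \<le> B" using B s by simp
    then have bdd: "bdd_below ((\<lambda>a. fm_eval S (\<sigma>(j := a)) \<phi>) ` sdom S)"
      by (intro bdd_belowI2[where m="-B"]) force
    from ne obtain a0 where a0: "a0 \<in> sdom S" by blast
    have "(INF a\<in>sdom S. fm_eval S (\<sigma>(j := a)) \<phi>) \<le> fm_eval S (\<sigma>(j := a0)) \<phi>"
      by (rule cINF_lower[OF bdd a0])
    also have "\<dots> \<le> B" using bb[OF a0] by simp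
    finally have u: "(INF a\<in>sdom S. fm_eval S (\<sigma>(j := a)) \<phi>) \<le> B" .
    have l: "-B \<le> (INF a\<in>sdom S. fm_eval S (\<sigma>(j := a)) \<phi>)"
      using ne bb by (intro cINF_greatest) force+
    show "\<bar>fm_eval S \<sigma> (Inf j \<phi>)\<bar> \<le> B" using u l by simp
  qed
next
  case (Sup j \<phi>)
  then obtain B where B: "\<forall>\<sigma>. (\<forall>i. \<sigma> i \<in> sdom S) \<longrightarrow> \<bar>fm_eval S \<sigma> \<phi>\<bar> \<le> B" by auto
  have ne: "sdom S \<noteq> {}" using S unfolding is_structure_def by blast
  show ?case
  proof (intro exI allI impI)
    fix \<sigma> :: "nat \<Rightarrow> _" assume s: "\<forall>i. \<sigma> i \<in> sdom S"
    have bb: "\<And>a. a \<in> sdom S \<Longrightarrow> \<bar>fm_eval S (\<sigma>(j := a)) \<phi>\<bar> \<le> B" using B s by simp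
    then have bdd: "bdd_above ((\<lambda>a. fm_eval S (\<sigma>(j := a)) \<phi>) ` sdom S)"
      by (intro bdd_aboveI2[where M="B"]) force
    from ne obtain a0 where a0: "a0 \<in> sdom S" by blast
    have "-B \<le> fm_eval S (\<sigma>(j := a0)) \<phi>" using bb[OF a0] by simp
    also have "\<dots> \<le> (SUP a\<in>sdom S. fm_eval S (\<sigma>(j := a)) \<phi>)"
      by (rule cSUP_upper[OF a0 bdd])
    finally have l: "-B \<le> (SUP a\<in>sdom S. fm_eval S (\<sigma>(j := a)) \<phi>)" .
    have u: "(SUP a\<in>sdom S. fm_eval S (\<sigma>(j := a)) \<phi>) \<le> B"
      using ne bb by (intro cSUP_least) force+
    show "\<bar>fm_eval S \<sigma> (Sup j \<phi>)\<bar> \<le> B" using u l by simp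
  qed
qed

lemma sup_bdd:
  assumes N: "is_structure L N" and wf: "wf_fm L \<psi>" and r: "\<forall>i. \<rho> i \<in> sdom N"
  shows "bdd_above ((\<lambda>x. fm_eval N (\<rho>(0 := x)) \<psi>) ` sdom N)"
    and "bdd_below ((\<lambda>x. fm_eval N (\<rho>(0 := x)) \<psi>) ` sdom N)"
proof -
  obtain B where B: "\<forall>\<sigma>. (\<forall>i. \<sigma> i \<in> sdom N) \<longrightarrow> \<bar>fm_eval N \<sigma> \<psi>\<bar> \<le> B"
    using fm_bounded[OF N wf] by blast
  have bb: "\<And>x. x \<in> sdom N \<Longrightarrow> \<bar>fm_eval N (\<rho>(0 := x)) \<psi>\<bar> \<le> B" using B r by simp
  show "bdd_above ((\<lambda>x. fm_eval N (\<rho>(0 := x)) \<psi>) ` sdom N)"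
    using bb by (intro bdd_aboveI2[where M="B"]) force
  show "bdd_below ((\<lambda>x. fm_eval N (\<rho>(0 := x)) \<psi>) ` sdom N)"
    using bb by (intro bdd_belowI2[where m="-B"]) force
qed

lemma sup_transfer:
  assumes M: "is_structure L M" and N: "is_structure L N" and E: "elem_sub L M N"
    and wf: "wf_fm L \<psi>" and r: "\<forall>i. \<rho> i \<in> sdom M"
    and le: "\<forall>x\<in>sdom M. fm_eval M (\<rho>(0 := x)) \<psi> \<le> e"
  shows "\<forall>x\<in>sdom N. fm_eval N (\<rho>(0 := x)) \<psi> \<le> e"
proof
  fix x assume x: "x \<in> sdom N"
  have MN: "sdom M \<subseteq> sdom N" using E unfolding elem_sub_def substructure_def by blast
  have neM: "sdom M \<noteq> {}" using M unfolding is_structure_def by blast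
  have "fm_eval M \<rho> (Sup 0 \<psi>) \<le> e"
    using le neM by (simp add: cSUP_least)
  moreover have "fm_eval M \<rho> (Sup 0 \<psi>) = fm_eval N \<rho> (Sup 0 \<psi>)"
    using E wf r unfolding elem_sub_def by (metis wf_fm.simps(7))
  moreover have rN: "\<forall>i. \<rho> i \<in> sdom N" using r MN by blast
  have "fm_eval N (\<rho>(0 := x)) \<psi> \<le> fm_eval N \<rho> (Sup 0 \<psi>)"
    using cSUP_upper[OF x sup_bdd(1)[OF N wf rN]] by simp
  ultimately show "fm_eval N (\<rho>(0 := x)) \<psi> \<le> e" by linarith
qed

lemma fresh_var: "\<exists>k::nat. k \<noteq> 0 \<and> k \<notin> fv \<phi>"
proof -
  have "finite (insert 0 (fv \<phi>))" by (simp add: finite_fv)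
  then obtain k where "k \<notin> insert 0 (fv \<phi>)" using ex_new_if_finite[OF infinite_UNIV_nat] by blast
  then show ?thesis by blast
qed

lemma transfer_bound:
  assumes M: "is_structure L M" and N: "is_structure L N" and E: "elem_sub L M N"
    and wf: "wf_fm L \<phi>" and t: "\<forall>i. \<tau> i \<in> sdom M" and a: "a \<in> sdom M"
    and b: "\<forall>x\<in>sdom M. \<bar>sdist M x a - fm_eval M (\<tau>(0 := x)) \<phi>\<bar> \<le> e"
  shows "\<forall>x\<in>sdom N. \<bar>sdist N x a - fm_eval N (\<tau>(0 := x)) \<phi>\<bar> \<le> e"
proof -
  obtain k where k: "k \<noteq> 0" "k \<notin> fv \<phi>" using fresh_var by blast
  define \<rho> where "\<rho> = \<tau>(k := a)"
  have r: "\<forall>i. \<rho> i \<in> sdom M" using t a unfolding \<rho>_def by simp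
  have cg: "\<And>S x. fm_eval S (\<rho>(0 := x)) \<phi> = fm_eval S (\<tau>(0 := x)) \<phi>"
    by (rule fm_eval_cong) (use k in \<open>auto simp: \<rho>_def\<close>)
  have rk: "\<And>x. (\<rho>(0 := x)) k = a" "\<And>x. (\<rho>(0 := x)) 0 = x" using k unfolding \<rho>_def by auto
  define \<psi>1 where "\<psi>1 = Add (Dist (Var 0) (Var k)) (Scale (-1) \<phi>)"
  define \<psi>2 where "\<psi>2 = Add \<phi> (Scale (-1) (Dist (Var 0) (Var k)))"
  have e1: "\<And>S x. fm_eval S (\<rho>(0 := x)) \<psi>1 = sdist S x a - fm_eval S (\<tau>(0 := x)) \<phi>"
    unfolding \<psi>1_def using rk cg by simp
  have e2: "\<And>S x. fm_eval S (\<rho>(0 := x)) \<psi>2 = fm_eval S (\<tau>(0 := x)) \<phi> - sdist S x a"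
    unfolding \<psi>2_def using rk cg by simp
  have w1: "wf_fm L \<psi>1" "wf_fm L \<psi>2" unfolding \<psi>1_def \<psi>2_def using wf by auto
  have "\<forall>x\<in>sdom N. fm_eval N (\<rho>(0 := x)) \<psi>1 \<le> e"
    by (rule sup_transfer[OF M N E w1(1) r]) (use b e1 in auto)
  moreover have "\<forall>x\<in>sdom N. fm_eval N (\<rho>(0 := x)) \<psi>2 \<le> e"
    by (rule sup_transfer[OF M N E w1(2) r]) (use b e2 in auto)
  ultimately show ?thesis using e1 e2 by (auto simp: abs_le_iff)
qed

lemma normalize:
  assumes A: "A \<subseteq> sdom M" and m0: "m0 \<in> sdom M" and s: "\<forall>i\<in>fv \<phi> - {0}. \<sigma> i \<in> A"
  shows "\<exists>\<tau>. (\<forall>i. \<tau> i \<in> sdom M) \<and> (\<forall>S x. fm_eval S (\<sigma>(0 := x)) \<phi> = fm_eval S (\<tau>(0 := x)) \<phi>)"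
proof (intro exI conjI allI)
  define \<tau> where "\<tau> = (\<lambda>i. if i \<in> fv \<phi> - {0} then \<sigma> i else m0)"
  show "\<tau> i \<in> sdom M" for i using A m0 s unfolding \<tau>_def by auto
  show "fm_eval S (\<sigma>(0 := x)) \<phi> = fm_eval S (\<tau>(0 := x)) \<phi>" for S x
    by (rule fm_eval_cong) (auto simp: \<tau>_def)
qed

lemma approx_in_M:
  assumes M: "is_structure L M" and N: "is_structure L N" and E: "elem_sub L M N"
    and A: "A \<subseteq> sdom M" and a: "a \<in> sdom N"
    and D: "definable_pred L N A (\<lambda>x. sdist N x a)" and e: "e > 0"
  shows "\<exists>y\<in>sdom M. sdist N y a < e"
proof -
  have MN: "sdom M \<subseteq> sdom N" using E unfolding elem_sub_def substructure_def by blast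
  have neM: "sdom M \<noteq> {}" using M unfolding is_structure_def by blast
  then obtain m0 where m0: "m0 \<in> sdom M" by blast
  obtain \<phi> \<sigma> where wf: "wf_fm L \<phi>" and s: "\<forall>i\<in>fv \<phi> - {0}. \<sigma> i \<in> A"
    and b: "\<forall>x\<in>sdom N. \<bar>sdist N x a - fm_eval N (\<sigma>(0 := x)) \<phi>\<bar> \<le> e/3"
  proof -
    have "e/3 > 0" using e by simp
    then show ?thesis using D that unfolding definable_pred_def by blast
  qed
  obtain \<tau> where t: "\<forall>i. \<tau> i \<in> sdom M"
    and cg: "\<forall>S x. fm_eval S (\<sigma>(0 := x)) \<phi> = fm_eval S (\<tau>(0 := x)) \<phi>"
    using normalize[OF A m0 s] by blast
  have b': "\<forall>x\<in>sdom N. \<bar>sdist N x a - fm_eval N (\<tau>(0 := x)) \<phi>\<bar> \<le> e/3" using b cg by simp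
  have tN: "\<forall>i. \<tau> i \<in> sdom N" using t MN by blast
  have aa: "sdist N a a = 0" using N a unfolding is_structure_def by blast
  have "fm_eval N \<tau> (Inf 0 \<phi>) \<le> fm_eval N (\<tau>(0 := a)) \<phi>"
    using cINF_lower[OF sup_bdd(2)[OF N wf tN] a] by simp
  also have "\<dots> \<le> e/3" using bspec[OF b' a] aa by linarith
  finally have "fm_eval N \<tau> (Inf 0 \<phi>) \<le> e/3" .
  moreover have "fm_eval M \<tau> (Inf 0 \<phi>) = fm_eval N \<tau> (Inf 0 \<phi>)"
    using E wf t unfolding elem_sub_def by (metis wf_fm.simps(6))
  ultimately have "(INF x\<in>sdom M. fm_eval M (\<tau>(0 := x)) \<phi>) < 2*e/3" using e by simp
  then obtain y where y: "y \<in> sdom M" and fy: "fm_eval M (\<tau>(0 := y)) \<phi> < 2*e/3"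
    using neM cInf_lessD[of "(\<lambda>x. fm_eval M (\<tau>(0 := x)) \<phi>) ` sdom M" "2*e/3"] by auto
  have "fm_eval M (\<tau>(0 := y)) \<phi> = fm_eval N (\<tau>(0 := y)) \<phi>"
    using E wf t y unfolding elem_sub_def by simp
  moreover have "\<bar>sdist N y a - fm_eval N (\<tau>(0 := y)) \<phi>\<bar> \<le> e/3" using b' y MN by blast
  ultimately have "sdist N y a < e" using fy by linarith
  then show ?thesis using y by blast
qed

lemma small_n: "(e::real) > 0 \<Longrightarrow> \<exists>K. \<forall>n\<ge>K. 1 / real (Suc n) < e"
proof -
  assume e: "e > 0"
  obtain K where K: "1 / e < real K" using reals_Archimedean2 by blast
  have "1 / real (Suc n) < e" if "n \<ge> K" for n
  proof -
    have "1/e < real (Suc n)" using K that by simp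
    then show ?thesis using e by (simp add: field_simps)
  qed
  then show ?thesis by blast
qed

lemma in_M:
  assumes M: "is_structure L M" and N: "is_structure L N" and E: "elem_sub L M N"
    and A: "A \<subseteq> sdom M" and a: "a \<in> sdom N"
    and D: "definable_pred L N A (\<lambda>x. sdist N x a)"
  shows "a \<in> sdom M"
proof -
  have MN: "sdom M \<subseteq> sdom N" using E unfolding elem_sub_def substructure_def by blast
  have dMN: "\<forall>x\<in>sdom M. \<forall>y\<in>sdom M. sdist M x y = sdist N x y"
    using E unfolding elem_sub_def substructure_def by blast
  have tri: "\<And>x y z. x \<in> sdom N \<Longrightarrow> y \<in> sdom N \<Longrightarrow> z \<in> sdom N \<Longrightarrow> sdist N x z \<le> sdist N x y + sdist N y z"
    using N unfolding is_structure_def by blast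
  have sym: "\<And>x y. x \<in> sdom N \<Longrightarrow> y \<in> sdom N \<Longrightarrow> sdist N x y = sdist N y x"
    using N unfolding is_structure_def by blast
  have pos: "\<And>x y. x \<in> sdom N \<Longrightarrow> y \<in> sdom N \<Longrightarrow> 0 \<le> sdist N x y"
    using N unfolding is_structure_def by blast
  have zero: "\<And>x y. x \<in> sdom N \<Longrightarrow> y \<in> sdom N \<Longrightarrow> sdist N x y = 0 \<Longrightarrow> x = y"
    using N unfolding is_structure_def by blast
  have compl: "\<forall>X::nat \<Rightarrow> _. (\<forall>n. X n \<in> sdom M) \<longrightarrow>
        (\<forall>e>0. \<exists>N. \<forall>m\<ge>N. \<forall>n\<ge>N. sdist M (X m) (X n) < e) \<longrightarrow>
        (\<exists>l\<in>sdom M. \<forall>e>0. \<exists>N. \<forall>n\<ge>N. sdist M (X n) l < e)"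
    using M unfolding is_structure_def by blast
  have "\<forall>n. \<exists>y. y \<in> sdom M \<and> sdist N y a < 1 / real (Suc n)"
  proof
    fix n :: nat
    have "1 / real (Suc n) > 0" by simp
    then show "\<exists>y. y \<in> sdom M \<and> sdist N y a < 1 / real (Suc n)"
      using approx_in_M[OF M N E A a D] by blast
  qed
  then obtain X where X: "\<And>n. X n \<in> sdom M" and Xa: "\<And>n. sdist N (X n) a < 1 / real (Suc n)"
    by metis
  have XN: "\<And>n. X n \<in> sdom N" using X MN by blast
  have cauchy: "\<forall>e>0. \<exists>K. \<forall>m\<ge>K. \<forall>n\<ge>K. sdist M (X m) (X n) < e"
  proof (intro allI impI)
    fix e :: real assume e: "e > 0"
    then obtain K where K: "\<forall>n\<ge>K. 1 / real (Suc n) < e/2" using small_n[of "e/2"] by auto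
    have "sdist M (X m) (X n) < e" if "m \<ge> K" "n \<ge> K" for m n
    proof -
      have "sdist M (X m) (X n) = sdist N (X m) (X n)" using dMN X by blast
      also have "\<dots> \<le> sdist N (X m) a + sdist N a (X n)" using tri XN a by blast
      also have "\<dots> = sdist N (X m) a + sdist N (X n) a" using sym XN a by metis
      also have "\<dots> < e"
      proof -
        have "1 / real (Suc m) < e/2" "1 / real (Suc n) < e/2" using K that by auto
        then show ?thesis using Xa[of m] Xa[of n] by linarith
      qed
      finally show ?thesis .
    qed
    then show "\<exists>K. \<forall>m\<ge>K. \<forall>n\<ge>K. sdist M (X m) (X n) < e" by blast
  qed
  obtain l where l: "l \<in> sdom M" and lim: "\<forall>e>0. \<exists>K. \<forall>n\<ge>K. sdist M (X n) l < e"
    using compl X cauchy by blast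
  have lN: "l \<in> sdom N" using l MN by blast
  have small: "sdist N l a < e" if e: "e > 0" for e
  proof -
    obtain K1 where K1: "\<forall>n\<ge>K1. sdist M (X n) l < e/2" using lim e by (meson half_gt_zero)
    obtain K2 where K2: "\<forall>n\<ge>K2. 1 / real (Suc n) < e/2" using small_n[of "e/2"] e by auto
    define n where "n = max K1 K2"
    have "sdist N l a \<le> sdist N l (X n) + sdist N (X n) a" using tri lN XN a by blast
    also have "sdist N l (X n) = sdist M (X n) l" using sym lN XN dMN X l by metis
    finally have "sdist N l a \<le> sdist M (X n) l + sdist N (X n) a" .
    moreover have "sdist M (X n) l < e/2" using K1 unfolding n_def by auto
    moreover have "1 / real (Suc n) < e/2" using K2 unfolding n_def by auto
    ultimately show ?thesis using Xa[of n] by linarith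
  qed
  have "sdist N l a = 0"
  proof (rule ccontr)
    assume "sdist N l a \<noteq> 0"
    then have "sdist N l a > 0" using pos lN a by force
    then show False using small[of "sdist N l a"] by simp
  qed
  then have "l = a" using zero lN a by blast
  then show ?thesis using l by simp
qed

theorem mainTheorem11:
  fixes L :: "('f, 'r) signature"
    and M N :: "('a, 'f, 'r) struct"
    and A :: "'a set"
    and T :: "(('f, 'r) afm \<times> real) set"
  assumes "complete_aff_theory L TYPE('a) T"
    and "is_structure L M" and "models M T"
    and "is_structure L N" and "models N T"
    and "A \<subseteq> sdom M"
    and "elem_sub L M N"
  shows "dcl L M A = dcl L N A"
proof -
  note M = assms(2) and N = assms(4) and A = assms(6) and E = assms(7)
  have MN: "sdom M \<subseteq> sdom N" using E unfolding elem_sub_def substructure_def by blast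
  have dMN: "\<forall>x\<in>sdom M. \<forall>y\<in>sdom M. sdist M x y = sdist N x y"
    using E unfolding elem_sub_def substructure_def by blast
  have neM: "sdom M \<noteq> {}" using M unfolding is_structure_def by blast
  then obtain m0 where m0: "m0 \<in> sdom M" by blast
  show ?thesis
  proof
    show "dcl L M A \<subseteq> dcl L N A"
    proof
      fix a assume "a \<in> dcl L M A"
      then have a: "a \<in> sdom M" and D: "definable_pred L M A (\<lambda>x. sdist M x a)"
        unfolding dcl_def by auto
      have "definable_pred L N A (\<lambda>x. sdist N x a)"
        unfolding definable_pred_def
      proof (intro allI impI)
        fix e :: real assume e: "e > 0"
        obtain \<phi> \<sigma> where wf: "wf_fm L \<phi>" and s: "\<forall>i\<in>fv \<phi> - {0}. \<sigma> i \<in> A"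
          and b: "\<forall>x\<in>sdom M. \<bar>sdist M x a - fm_eval M (\<sigma>(0 := x)) \<phi>\<bar> \<le> e"
          using D[unfolded definable_pred_def, rule_format, OF e] by (elim exE conjE) blast
        obtain \<tau> where t: "\<forall>i. \<tau> i \<in> sdom M"
          and cg: "\<forall>S x. fm_eval S (\<sigma>(0 := x)) \<phi> = fm_eval S (\<tau>(0 := x)) \<phi>"
          using normalize[OF A m0 s] by blast
        have "\<forall>x\<in>sdom N. \<bar>sdist N x a - fm_eval N (\<tau>(0 := x)) \<phi>\<bar> \<le> e"
          by (rule transfer_bound[OF M N E wf t a]) (use b cg in simp)
        then have "\<forall>x\<in>sdom N. \<bar>sdist N x a - fm_eval N (\<sigma>(0 := x)) \<phi>\<bar> \<le> e"
          using cg by simp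
        then show "\<exists>\<phi> \<sigma>. wf_fm L \<phi> \<and> (\<forall>i\<in>fv \<phi> - {0}. \<sigma> i \<in> A) \<and>
            (\<forall>x\<in>sdom N. \<bar>sdist N x a - fm_eval N (\<sigma>(0 := x)) \<phi>\<bar> \<le> e)"
          using wf s by blast
      qed
      then show "a \<in> dcl L N A" using a MN unfolding dcl_def by blast
    qed
  next
    show "dcl L N A \<subseteq> dcl L M A"
    proof
      fix a assume "a \<in> dcl L N A"
      then have aN: "a \<in> sdom N" and D: "definable_pred L N A (\<lambda>x. sdist N x a)"
        unfolding dcl_def by auto
      have a: "a \<in> sdom M" by (rule in_M[OF M N E A aN D])
      have "definable_pred L M A (\<lambda>x. sdist M x a)"
        unfolding definable_pred_def
      proof (intro allI impI)
        fix e :: real assume e: "e > 0"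
        obtain \<phi> \<sigma> where wf: "wf_fm L \<phi>" and s: "\<forall>i\<in>fv \<phi> - {0}. \<sigma> i \<in> A"
          and b: "\<forall>x\<in>sdom N. \<bar>sdist N x a - fm_eval N (\<sigma>(0 := x)) \<phi>\<bar> \<le> e"
          using D[unfolded definable_pred_def, rule_format, OF e] by (elim exE conjE) blast
        obtain \<tau> where t: "\<forall>i. \<tau> i \<in> sdom M"
          and cg: "\<forall>S x. fm_eval S (\<sigma>(0 := x)) \<phi> = fm_eval S (\<tau>(0 := x)) \<phi>"
          using normalize[OF A m0 s] by blast
        have "\<bar>sdist M x a - fm_eval M (\<sigma>(0 := x)) \<phi>\<bar> \<le> e" if x: "x \<in> sdom M" for x
        proof -
          have "fm_eval M (\<sigma>(0 := x)) \<phi> = fm_eval M (\<tau>(0 := x)) \<phi>" using cg by simp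
          also have "\<dots> = fm_eval N (\<tau>(0 := x)) \<phi>"
            using E wf t x unfolding elem_sub_def by simp
          also have "\<dots> = fm_eval N (\<sigma>(0 := x)) \<phi>" using cg by simp
          finally have "fm_eval M (\<sigma>(0 := x)) \<phi> = fm_eval N (\<sigma>(0 := x)) \<phi>" .
          moreover have "sdist M x a = sdist N x a" using dMN x a by blast
          ultimately show ?thesis using b x MN by auto
        qed
        then show "\<exists>\<phi> \<sigma>. wf_fm L \<phi> \<and> (\<forall>i\<in>fv \<phi> - {0}. \<sigma> i \<in> A) \<and>
            (\<forall>x\<in>sdom M. \<bar>sdist M x a - fm_eval M (\<sigma>(0 := x)) \<phi>\<bar> \<le> e)"
          using wf s by blast
      qed
      then show "a \<in> dcl L M A" using a unfolding dcl_def by blast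
    qed
  qed
qed

end
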